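(* Let $f\in\mathcal{F}_k$ and let $\bar p$ be the uniform distribution on $\mathcal{Y}$. For all $v\in\mathcal{V}$, $\ell_{\text{abs}}^f(v;\bar p)\ge f([k])$. For all $r\in\mathcal{Y}$, $\ell_{\text{abs}}^f(r;\bar p)=2\bar f$, where $\bar f=2^{-k}\sum_{S\subseteq[k]}f(S)$.
   Context: $[k]=\{1,\dots,k\}$, $\mathcal{Y}=\{-1,1\}^k$, $\mathcal{V}=\{-1,0,1\}^k$. $\mathcal{F}_k$: set functions $f:2^{[k]}\to\mathbb{R}$ that are submodular ($f(S)+f(T)\ge f(S\cup T)+f(S\cap T)$), increasing and normalized ($f(\emptyset)=0$). $\ell_{\text{abs}}^f(v,y)=f(\{i:v_iy_i<0\})+f(\{i:v_iy_i\le0\})$ for $v\in\mathcal{V},y\in\mathcal{Y}$, and $\ell_{\text{abs}}^f(v;p)=\sum_yp_y\ell_{\text{abs}}^f(v,y)$. *)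

theory Defs
  imports Complex_Main "HOL-Library.FuncSet"
begin

definition Ycube :: "nat \<Rightarrow> (nat \<Rightarrow> int) set" where
  "Ycube k = PiE {1..k} (\<lambda>_. {-1, 1})"

definition Vcube :: "nat \<Rightarrow> (nat \<Rightarrow> int) set" where
  "Vcube k = PiE {1..k} (\<lambda>_. {-1, 0, 1})"

definition submodular_on :: "nat \<Rightarrow> (nat set \<Rightarrow> real) \<Rightarrow> bool" where
  "submodular_on k f \<longleftrightarrow> (\<forall>S T. S \<subseteq> {1..k} \<longrightarrow> T \<subseteq> {1..k} \<longrightarrow>
      f S + f T \<ge> f (S \<union> T) + f (S \<inter> T))"

definition increasing_on :: "nat \<Rightarrow> (nat set \<Rightarrow> real) \<Rightarrow> bool" where
  "increasing_on k f \<longleftrightarrow> (\<forall>S T. S \<subseteq> T \<longrightarrow> T \<subseteq> {1..k} \<longrightarrow> f S \<le> f T)"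

definition Fk :: "nat \<Rightarrow> (nat set \<Rightarrow> real) set" where
  "Fk k = {f. submodular_on k f \<and> increasing_on k f \<and> f {} = 0}"

definition loss_abs :: "nat \<Rightarrow> (nat set \<Rightarrow> real) \<Rightarrow> (nat \<Rightarrow> int) \<Rightarrow> (nat \<Rightarrow> int) \<Rightarrow> real" where
  "loss_abs k f v y = f {i \<in> {1..k}. v i * y i < 0} + f {i \<in> {1..k}. v i * y i \<le> 0}"

definition loss_abs_p :: "nat \<Rightarrow> (nat set \<Rightarrow> real) \<Rightarrow> (nat \<Rightarrow> int) \<Rightarrow> ((nat \<Rightarrow> int) \<Rightarrow> real) \<Rightarrow> real" where
  "loss_abs_p k f v p = (\<Sum>y\<in>Ycube k. p y * loss_abs k f v y)"

definition uniform_Y :: "nat \<Rightarrow> (nat \<Rightarrow> int) \<Rightarrow> real" where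
  "uniform_Y k y = 1 / 2 ^ k"

definition fbar :: "nat \<Rightarrow> (nat set \<Rightarrow> real) \<Rightarrow> real" where
  "fbar k f = (1 / 2 ^ k) * (\<Sum>S\<in>Pow {1..k}. f S)"

end

theory Submission
  imports Defs
begin

definition negv :: "nat \<Rightarrow> (nat \<Rightarrow> int) \<Rightarrow> (nat \<Rightarrow> int)" where
  "negv k y = (\<lambda>i. if i \<in> {1..k} then - y i else undefined)"

lemma card_Ycube: "card (Ycube k) = 2 ^ k"
proof -
  have c: "card {-1, 1::int} = 2" by simp
  have "card (Ycube k) = (\<Prod>i\<in>{1..k}. card {-1, 1::int})"
    unfolding Ycube_def by (rule card_PiE) simp
  also have "\<dots> = 2 ^ k" by (simp only: c prod_constant card_atLeastAtMost) simp
  finally show ?thesis .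
qed

lemma finite_Ycube: "finite (Ycube k)"
  unfolding Ycube_def by (simp add: finite_PiE)

lemma Ycube_mem: "y \<in> Ycube k \<Longrightarrow> i \<in> {1..k} \<Longrightarrow> y i = -1 \<or> y i = 1"
  unfolding Ycube_def by (auto simp: PiE_iff)

lemma negv_in: "y \<in> Ycube k \<Longrightarrow> negv k y \<in> Ycube k"
  unfolding Ycube_def negv_def by (auto simp: PiE_iff extensional_def)

lemma negv_negv: "y \<in> Ycube k \<Longrightarrow> negv k (negv k y) = y"
  unfolding Ycube_def negv_def by (auto simp: PiE_iff extensional_def)

lemma part1:
  assumes "f \<in> Fk k" "v \<in> Vcube k"
  shows "loss_abs_p k f v (uniform_Y k) \<ge> f {1..k}"
proof -
  define A where "A y = {i \<in> {1..k}. v i * y i < 0}" for y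
  define B where "B y = {i \<in> {1..k}. v i * y i \<le> 0}" for y
  have sub: "submodular_on k f" and f0: "f {} = 0" using assms(1) by (auto simp: Fk_def)
  have eq: "loss_abs_p k f v (uniform_Y k) = (1/2^k) * (\<Sum>y\<in>Ycube k. f (A y) + f (B y))"
    unfolding loss_abs_p_def uniform_Y_def loss_abs_def A_def B_def
    by (simp add: sum_distrib_left)
  have "(\<Sum>y\<in>Ycube k. f (B y)) = (\<Sum>y\<in>Ycube k. f (B (negv k y)))"
    by (rule sum.reindex_bij_witness[of _ "negv k" "negv k"])
       (auto simp: negv_in negv_negv)
  hence "(\<Sum>y\<in>Ycube k. f (A y) + f (B y)) = (\<Sum>y\<in>Ycube k. f (A y) + f (B (negv k y)))"
    by (simp add: sum.distrib)
  also have "\<dots> \<ge> (\<Sum>y\<in>Ycube k. f {1..k})"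
  proof (rule sum_mono)
    fix y assume "y \<in> Ycube k"
    have u: "A y \<union> B (negv k y) = {1..k}" and n: "A y \<inter> B (negv k y) = {}"
      unfolding A_def B_def negv_def by auto
    have "A y \<subseteq> {1..k}" "B (negv k y) \<subseteq> {1..k}" unfolding A_def B_def by auto
    with sub have "f (A y) + f (B (negv k y)) \<ge> f (A y \<union> B (negv k y)) + f (A y \<inter> B (negv k y))"
      unfolding submodular_on_def by blast
    thus "f {1..k} \<le> f (A y) + f (B (negv k y))" using u n f0 by simp
  qed
  finally have "(\<Sum>y\<in>Ycube k. f (A y) + f (B y)) \<ge> 2^k * f {1..k}"
    by (simp add: card_Ycube)
  hence "(1/2^k) * (\<Sum>y\<in>Ycube k. f (A y) + f (B y)) \<ge> (1/2^k) * (2^k * f {1..k})"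
    by (intro mult_left_mono) auto
  thus ?thesis using eq by simp
qed

lemma part2:
  assumes "r \<in> Ycube k"
  shows "loss_abs_p k f r (uniform_Y k) = 2 * fbar k f"
proof -
  define D where "D y = {i \<in> {1..k}. y i \<noteq> r i}" for y
  define E where "E S = (\<lambda>i. if i \<in> {1..k} then (if i \<in> S then - r i else r i) else undefined)" for S
  have l: "loss_abs k f r y = 2 * f (D y)" if "y \<in> Ycube k" for y
  proof -
    have "{i \<in> {1..k}. r i * y i < 0} = D y" "{i \<in> {1..k}. r i * y i \<le> 0} = D y"
      unfolding D_def using Ycube_mem[OF that] Ycube_mem[OF assms] by fastforce+
    thus ?thesis unfolding loss_abs_def by simp
  qed
  have "loss_abs_p k f r (uniform_Y k) = (1/2^k) * (\<Sum>y\<in>Ycube k. 2 * f (D y))"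
    unfolding loss_abs_p_def uniform_Y_def using l by (simp add: sum_distrib_left)
  also have "(\<Sum>y\<in>Ycube k. 2 * f (D y)) = (\<Sum>S\<in>Pow {1..k}. 2 * f S)"
  proof (rule sum.reindex_bij_witness[of _ E D])
    fix y assume y: "y \<in> Ycube k"
    show "E (D y) = y"
    proof
      fix i show "E (D y) i = y i"
      proof (cases "i \<in> {1..k}")
        case True
        then show ?thesis unfolding E_def D_def using Ycube_mem[OF y, of i] Ycube_mem[OF assms, of i]
          by auto
      next
        case False
        then show ?thesis unfolding E_def using y by (auto simp: Ycube_def PiE_iff extensional_def)
      qed
    qed
    show "D y \<in> Pow {1..k}" unfolding D_def by auto
  next
    fix S assume S: "S \<in> Pow {1..k}"
    show "D (E S) = S" unfolding E_def D_def using S Ycube_mem[OF assms] by force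
    show "E S \<in> Ycube k" unfolding E_def using Ycube_mem[OF assms]
      by (auto simp: Ycube_def PiE_iff extensional_def; metis)
  qed simp
  finally show ?thesis unfolding fbar_def by (simp add: sum_distrib_left)
qed

theorem lemma5:
  fixes k :: nat and f :: "nat set \<Rightarrow> real"
  assumes "f \<in> Fk k"
  shows "(\<forall>v\<in>Vcube k. loss_abs_p k f v (uniform_Y k) \<ge> f {1..k})
       \<and> (\<forall>r\<in>Ycube k. loss_abs_p k f r (uniform_Y k) = 2 * fbar k f)"
  using part1[OF assms] part2 by blast

end
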